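(* Let $(a,b,c)\in\mathbb{R}^3\setminus\{(0,0,0)\}$, $A_1=(a,b,c)$, $A_2=(-ae^{c},-be^{-c},-c)$, and let $N(x,y,z)=e^{z}(x+ae^{c})(x-a)+e^{-z}(y+be^{-c})(y-b)+4\sinh\frac{z+c}{2}\sinh\frac{z-c}{2}$, so that the translation-like Thaloid of $\overline{A_1A_2}$ together with $A_1,A_2$ is the zero set $\{N=0\}$. Then for no $R>0$ does $\{N=0\}$ coincide with the translation sphere $S^t_O(R)=\Big\{(x,y,z):\big(\tfrac{xz}{1-e^{-z}}\big)^2+\big(\tfrac{yz}{e^{z}-1}\big)^2+z^2=R^2\Big\}$ (where $\tfrac{z}{1-e^{-z}}$ and $\tfrac{z}{e^z-1}$ are interpreted as $1$ at $z=0$) centered at the origin; in particular the Thaloid is never the translation sphere of radius equal to the translation distance from the origin to $A_1$.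
   Context: $\mathbf{Sol}$ is $\mathbb{R}^3$ with coordinates $(x,y,z)$, group law $(a,b,c)(x,y,z)=(x+ae^{-z},\,y+be^{z},\,z+c)$, and left-invariant metric $ds^2=e^{2z}dx^2+e^{-2z}dy^2+dz^2$. The translation curve starting at the origin with initial unit vector $(u,v,w)$ is $t\mapsto\big(-\tfrac{u}{w}(e^{-wt}-1),\tfrac{v}{w}(e^{wt}-1),wt\big)$ if $w\neq0$ and $t\mapsto(ut,vt,0)$ if $w=0$; the translation distance from the origin to a point is the parameter length $t$ of this curve reaching it, and $S^t_O(R)$ is the set of points at translation distance $R$ from the origin. For $P=(p_1,p_2,p_3)$ let $T_P(X,Y,Z)=(p_1+Xe^{-p_3},\,p_2+Ye^{p_3},\,p_3+Z)$; the translation curve from $P$ to $Q$ is the $T_P$-image of the translation curve from the origin to $T_P^{-1}(Q)$. The translation-like Thaloid of $\overline{A_1A_2}$ is the set of points $P\notin\{A_1,A_2\}$ at which the initial tangent vectors of the translation curves from $P$ to $A_1$ and to $A_2$ are orthogonal with respect to the metric at $P$. *)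

theory Defs
  imports Complex_Main
begin

text \<open>Points of Sol are triples (x, y, z) :: real \<times> real \<times> real.\<close>

definition thaloidN :: "real \<Rightarrow> real \<Rightarrow> real \<Rightarrow> real \<Rightarrow> real \<Rightarrow> real \<Rightarrow> real" where
  "thaloidN a b c x y z =
     exp z * (x + a * exp c) * (x - a) + exp (- z) * (y + b * exp (- c)) * (y - b)
     + 4 * sinh ((z + c) / 2) * sinh ((z - c) / 2)"

definition phi1 :: "real \<Rightarrow> real" where
  "phi1 z = (if z = 0 then 1 else z / (1 - exp (- z)))"

definition phi2 :: "real \<Rightarrow> real" where
  "phi2 z = (if z = 0 then 1 else z / (exp z - 1))"

definition transl_sphere :: "real \<Rightarrow> (real \<times> real \<times> real) set" where
  "transl_sphere R = {(x, y, z). (x * phi1 z)\<^sup>2 + (y * phi2 z)\<^sup>2 + z\<^sup>2 = R\<^sup>2}"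

end

theory Submission
  imports Defs
begin

lemma sinh_lt_mult_cosh:
  fixes t :: real assumes "t > 0" shows "sinh t < t * cosh t"
proof -
  have "(\<lambda>s. s * cosh s - sinh s) 0 < (\<lambda>s. s * cosh s - sinh s) t"
  proof (rule DERIV_pos_imp_increasing_open[OF assms])
    fix x :: real assume "0 < x" "x < t"
    have "DERIV (\<lambda>s. s * cosh s - sinh s) x :> (1 * cosh x + x * sinh x - cosh x)"
      by (auto intro!: derivative_eq_intros)
    moreover have "1 * cosh x + x * sinh x - cosh x > 0" using \<open>0 < x\<close> by simp
    ultimately show "\<exists>y. DERIV (\<lambda>s. s * cosh s - sinh s) x :> y \<and> y > 0" by blast
  next
    show "continuous_on {0..t} (\<lambda>s. s * cosh s - sinh s)"
      by (intro continuous_intros)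
  qed
  thus ?thesis by simp
qed

lemma key_ineq:
  fixes R :: real assumes "R > 0" "R^2 < 2" shows "(2 - R^2) * cosh R < 2"
proof -
  have "(\<lambda>s. (2 - s^2) * cosh s) R < (\<lambda>s. (2 - s^2) * cosh s) 0"
  proof (rule DERIV_neg_imp_decreasing_open[OF assms(1)])
    fix x :: real assume x: "0 < x" "x < R"
    have "DERIV (\<lambda>s. (2 - s^2) * cosh s) x :> ((0 - 2 * x ^ 1 * 1) * cosh x + (2 - x^2) * sinh x)"
      by (auto intro!: derivative_eq_intros)
    moreover have "(0 - 2 * x ^ 1 * 1) * cosh x + (2 - x^2) * sinh x < 0"
    proof -
      have x2: "x^2 < 2" using x assms
        by (smt (verit) power_strict_mono zero_le_power2 zero_less_numeral)
      have "(2 - x^2) * sinh x < (2 - x^2) * (x * cosh x)"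
        using sinh_lt_mult_cosh[OF x(1)] x2 by simp
      also have "\<dots> \<le> 2 * x * cosh x" using x
        by (simp add: algebra_simps)
      finally show ?thesis by simp
    qed
    ultimately show "\<exists>y. DERIV (\<lambda>s. (2 - s^2) * cosh s) x :> y \<and> y < 0" by blast
  next
    show "continuous_on {0..R} (\<lambda>s. (2 - s^2) * cosh s)"
      by (intro continuous_intros)
  qed
  thus ?thesis by simp
qed

lemma sinh_gt:
  fixes t :: real assumes "t > 0" shows "t < sinh t"
proof -
  have "(\<lambda>s. sinh s - s) 0 < (\<lambda>s. sinh s - s) t"
  proof (rule DERIV_pos_imp_increasing_open[OF assms])
    fix x :: real assume "0 < x" "x < t"
    have "DERIV (\<lambda>s. sinh s - s) x :> (cosh x - 1)"
      by (auto intro!: derivative_eq_intros)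
    moreover have "cosh x - 1 > 0" using \<open>0 < x\<close> cosh_real_ge_1[of x] cosh_real_one_iff[of x]
      by linarith
    ultimately show "\<exists>y. DERIV (\<lambda>s. sinh s - s) x :> y \<and> y > 0" by blast
  next
    show "continuous_on {0..t} (\<lambda>s. sinh s - s)"
      by (intro continuous_intros)
  qed
  thus ?thesis by simp
qed

theorem lemma4p2:
  fixes a b c R :: real
  assumes "(a, b, c) \<noteq> (0, 0, 0)" and "R > 0"
  shows "{(x, y, z). thaloidN a b c x y z = 0} \<noteq> transl_sphere R"
proof
  assume eq: "{(x, y, z). thaloidN a b c x y z = 0} = transl_sphere R"
  have iff: "thaloidN a b c x y z = 0 \<longleftrightarrow> (x * phi1 z)\<^sup>2 + (y * phi2 z)\<^sup>2 + z\<^sup>2 = R\<^sup>2" for x y z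
  proof -
    have "(x,y,z) \<in> {(x, y, z). thaloidN a b c x y z = 0} \<longleftrightarrow> (x,y,z) \<in> transl_sphere R"
      using eq by simp
    thus ?thesis unfolding transl_sphere_def by simp
  qed
  have p0: "phi1 0 = 1" "phi2 0 = 1" by (simp_all add: phi1_def phi2_def)
  have n1: "thaloidN a b c R 0 0 = 0" and n2: "thaloidN a b c (-R) 0 0 = 0"
    and n3: "thaloidN a b c 0 R 0 = 0" and n4: "thaloidN a b c 0 (-R) 0 = 0"
    and n5: "thaloidN a b c 0 0 R = 0" and n6: "thaloidN a b c 0 0 (-R) = 0"
    by (simp_all add: iff p0)
  show False
  proof (cases "c = 0")
    case False
    have "a * (exp c - 1) = 0"
    proof -
      have "thaloidN a b c R 0 0 - thaloidN a b c (-R) 0 0 = 2 * R * a * (exp c - 1)"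
        unfolding thaloidN_def by (simp add: algebra_simps)
      thus ?thesis using n1 n2 assms(2) by simp
    qed
    moreover have "exp c \<noteq> 1" using False by simp
    ultimately have a0: "a = 0" by simp
    have "b * (exp (-c) - 1) = 0"
    proof -
      have "thaloidN a b c 0 R 0 - thaloidN a b c 0 (-R) 0 = 2 * R * b * (exp (-c) - 1)"
        unfolding thaloidN_def by (simp add: algebra_simps)
      thus ?thesis using n3 n4 assms(2) by simp
    qed
    moreover have "exp (-c) \<noteq> 1" using False by simp
    ultimately have b0: "b = 0" by simp
    have "thaloidN a b c 0 0 c = 0" unfolding thaloidN_def by (simp add: a0 b0)
    hence c2: "c^2 = R^2" using iff by simp
    have "thaloidN a b c R 0 0 = R^2 - 4 * sinh (c/2) * sinh (c/2)"
      unfolding thaloidN_def by (simp add: a0 b0 power2_eq_square)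
    hence "c^2 = 4 * (sinh (c/2))^2" using n1 c2 by (simp add: power2_eq_square)
    hence e: "c^2 = 4 * (sinh (\<bar>c\<bar>/2))^2"
      by (metis abs_divide abs_numeral power2_abs sinh_real_abs)
    have t: "\<bar>c\<bar>/2 > 0" using False by simp
    have "\<bar>c\<bar>/2 < sinh (\<bar>c\<bar>/2)" by (rule sinh_gt[OF t])
    hence "(\<bar>c\<bar>/2)^2 < (sinh (\<bar>c\<bar>/2))^2"
      using t by (intro power_strict_mono) auto
    thus False using e by (simp add: power2_eq_square)
  next
    case True
    have s: "4 * sinh (R/2) * sinh (R/2) = 2 * cosh R - 2"
      using cosh_double[of "R/2"] cosh_square_eq[of "R/2"] by (simp add: power2_eq_square)
    have r: "R^2 = a^2 + b^2" using n1 True unfolding thaloidN_def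
      by (simp add: power2_eq_square algebra_simps)
    have "thaloidN a b c 0 0 R + thaloidN a b c 0 0 (-R)
          = - (a^2 + b^2) * (exp R + exp (-R)) + 2 * (4 * sinh (R/2) * sinh (R/2))"
      unfolding thaloidN_def using True by (simp add: power2_eq_square algebra_simps)
    hence "(2 * cosh R) * (0 - R^2) + 2 * (2 * cosh R - 2) = 0"
      using n5 n6 s r by (simp add: cosh_def field_simps)
    hence e: "(2 - R^2) * cosh R = 2" by (simp add: algebra_simps)
    show False
    proof (cases "R^2 < 2")
      case True then show False using key_ineq[OF assms(2) True] e by simp
    next
      case False
      hence "(2 - R^2) * cosh R \<le> 0" by (intro mult_nonpos_nonneg) auto
      then show False using e by simp
    qed
  qed
qed

end
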